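(* In the Standing Setup with $R=-v(X-w)$ ($v,w\in\mathbb F$), for every $h\in\mathbb Z$: $$d_{h-1}d_h^2d_{h+1}^2d_{h+2}=v^2\bigl(w_h-wv_h+w^2\bigr).$$
   Context: Standing Setup. $\mathbb F$ is a field of characteristic not $2$ or $3$; $f,g\in\mathbb F$; $A=X^3+fX+g\in\mathbb F[X]$; $R\in\mathbb F[X]$ is a polynomial of degree at most $2$; $D=A^2+4R$; $Y$ satisfies $Y^2=D(X)$, $Z=\tfrac12(Y+A)$ and $\overline Z=\tfrac12(-Y+A)$, so $Z+\overline Z=A$ and $Z\overline Z=-R$. We are given sequences $(u_h),(v_h),(w_h),(d_h),(e_h)$ of elements of $\mathbb F$ indexed by $h\in\mathbb Z$, with all $u_h\neq0$, such that for every $h\in\mathbb Z$ the following two identities hold in $\mathbb F[X]$: (i) $A+d_h(X+e_h)+d_{h+1}(X+e_{h+1})=(X+v_h)(X^2-v_hX+w_h)$; (ii) $-u_hu_{h+1}(X^2-v_hX+w_h)(X^2-v_{h+1}X+w_{h+1})=d_{h+1}^2(X+e_{h+1})^2+d_{h+1}(X+e_{h+1})A-R$. (These say that $Z_h=\bigl(Z+d_h(X+e_h)\bigr)/\bigl(u_h(X^2-v_hX+w_h)\bigr)$ are consecutive complete quotients of a continued fraction expansion with partial quotients $(X+v_h)/u_h$.) *)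

theory Defs
  imports "HOL-Computational_Algebra.Polynomial"
begin

definition cubicA :: "'a::field \<Rightarrow> 'a \<Rightarrow> 'a poly" where
  "cubicA f g = [:g, f, 0, 1:]"

end

theory Submission
  imports Defs
begin

lemma coeffs_i:
  fixes f g :: "'a::field" and vv ww d e :: "int \<Rightarrow> 'a"
  assumes rel_i: "cubicA f g + smult (d h) [:e h, 1:] + smult (d (h + 1)) [:e (h + 1), 1:]
                  = [:vv h, 1:] * [:ww h, - vv h, 1:]"
  shows "f + d h + d (h+1) = ww h - (vv h)^2"
    and "g + d h * e h + d (h+1) * e (h+1) = vv h * ww h"
proof -
  have c: "coeff (cubicA f g + smult (d h) [:e h, 1:] + smult (d (h + 1)) [:e (h + 1), 1:]) n
   = coeff ([:vv h, 1:] * [:ww h, - vv h, 1:]) n" for n using rel_i by simp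
  show "f + d h + d (h+1) = ww h - (vv h)^2" using c[of 1]
    by (simp add: cubicA_def algebra_simps power2_eq_square)
  show "g + d h * e h + d (h+1) * e (h+1) = vv h * ww h" using c[of 0]
    by (simp add: cubicA_def algebra_simps power2_eq_square)
qed

lemma coeffs_ii:
  fixes f g v w :: "'a::field" and u vv ww d e :: "int \<Rightarrow> 'a" and R :: "'a poly"
  assumes R_def: "R = - smult v ([:0, 1:] - [:w:])"
    and rel_ii: " - smult (u h * u (h + 1)) ([:ww h, - vv h, 1:] * [:ww (h + 1), - vv (h + 1), 1:])
                  = smult ((d (h + 1))\<^sup>2) ([:e (h + 1), 1:]\<^sup>2)
                    + smult (d (h + 1)) [:e (h + 1), 1:] * cubicA f g - R"
  shows "- (u h * u (h+1)) = d (h+1)"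
    and "u h * u (h+1) * (vv h + vv (h+1)) = d (h+1) * e (h+1)"
    and "- (u h * u (h+1)) * (ww h + ww (h+1) + vv h * vv (h+1)) = (d (h+1))^2 + d (h+1) * f"
    and "u h * u (h+1) * (vv h * ww (h+1) + vv (h+1) * ww h) = 2 * (d (h+1))^2 * e (h+1) + d (h+1) * g + d (h+1) * e (h+1) * f + v"
    and "- (u h * u (h+1)) * (ww h * ww (h+1)) = (d (h+1))^2 * (e (h+1))^2 + d (h+1) * e (h+1) * g - v * w"
proof -
  let ?L = "- smult (u h * u (h + 1)) ([:ww h, - vv h, 1:] * [:ww (h + 1), - vv (h + 1), 1:])"
  let ?R = "smult ((d (h + 1))\<^sup>2) ([:e (h + 1), 1:]\<^sup>2)
                    + smult (d (h + 1)) [:e (h + 1), 1:] * cubicA f g - R"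
  have c: "coeff ?L n = coeff ?R n" for n using rel_ii by simp
  show "- (u h * u (h+1)) = d (h+1)" using c[of 4]
    by (simp add: cubicA_def R_def algebra_simps power2_eq_square numeral_eq_Suc)
  show "u h * u (h+1) * (vv h + vv (h+1)) = d (h+1) * e (h+1)" using c[of 3]
    by (simp add: cubicA_def R_def algebra_simps power2_eq_square numeral_eq_Suc)
  show "- (u h * u (h+1)) * (ww h + ww (h+1) + vv h * vv (h+1)) = (d (h+1))^2 + d (h+1) * f" using c[of 2]
    by (simp add: cubicA_def R_def algebra_simps power2_eq_square numeral_eq_Suc)
  show "u h * u (h+1) * (vv h * ww (h+1) + vv (h+1) * ww h) = 2 * (d (h+1))^2 * e (h+1) + d (h+1) * g + d (h+1) * e (h+1) * f + v" using c[of 1]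
    by (simp add: cubicA_def R_def algebra_simps power2_eq_square numeral_eq_Suc)
  show "- (u h * u (h+1)) * (ww h * ww (h+1)) = (d (h+1))^2 * (e (h+1))^2 + d (h+1) * e (h+1) * g - v * w" using c[of 0]
    by (simp add: cubicA_def R_def algebra_simps power2_eq_square numeral_eq_Suc)
qed

lemma T:
  fixes f g v w :: "'a::field" and u vv ww d e :: "int \<Rightarrow> 'a" and R :: "'a poly"
  assumes R_def: "R = - smult v ([:0, 1:] - [:w:])"
    and u_nz: "\<And>h. u h \<noteq> 0"
    and rel_i: "\<And>h. cubicA f g + smult (d h) [:e h, 1:] + smult (d (h + 1)) [:e (h + 1), 1:]
                  = [:vv h, 1:] * [:ww h, - vv h, 1:]"
    and rel_ii: "\<And>h. - smult (u h * u (h + 1)) ([:ww h, - vv h, 1:] * [:ww (h + 1), - vv (h + 1), 1:])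
                  = smult ((d (h + 1))\<^sup>2) ([:e (h + 1), 1:]\<^sup>2)
                    + smult (d (h + 1)) [:e (h + 1), 1:] * cubicA f g - R"
  shows "d (k - 1) * d k * d (k + 1) = - v * (w + e k)"
    and "d k * d (k + 1) * (w\<^sup>2 - w * vv k + ww k) = d k * d (k + 1) * ((w + e k) * (w + e (k+1)))"
    and "d k \<noteq> 0"
proof -
  note Ia = coeffs_i[where h="k-1" and d=d and e=e and f=f and g=g and vv=vv and ww=ww, OF rel_i, simplified]
  note Ib = coeffs_i[where h="k" and d=d and e=e and f=f and g=g and vv=vv and ww=ww, OF rel_i]
  note Qa = coeffs_ii[where h="k-1" and d=d and e=e and f=f and g=g and vv=vv and ww=ww and u=u, OF R_def rel_ii, simplified]
  note Qb = coeffs_ii[where h="k" and d=d and e=e and f=f and g=g and vv=vv and ww=ww and u=u, OF R_def rel_ii]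
  have U: "u k * u (k+1) = - d (k+1)" using Qb(1) by (metis minus_minus)
  have Ua: "u (k-1) * u k = - d k" using Qa(1) by (metis minus_minus)
  have "u (k-1) * u k \<noteq> 0" using u_nz by simp
  hence dk: "d k \<noteq> 0" unfolding Ua by simp
  have "u k * u (k+1) \<noteq> 0" using u_nz by simp
  hence dk1: "d (k+1) \<noteq> 0" unfolding U by simp
  have "d k * e k = d k * (- (vv (k-1) + vv k))" using Qa(2) unfolding Ua by (metis mult_minus_left mult_minus_right)
  hence Ea: "e k = - (vv (k-1) + vv k)" using dk by simp
  have "d (k+1) * e (k+1) = d (k+1) * (- (vv k + vv (k+1)))" using Qb(2) unfolding U by (metis mult_minus_left mult_minus_right)
  hence Eb: "e (k+1) = - (vv k + vv (k+1))" using dk1 by simp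
  have fa: "f = ww (k-1) - (vv (k-1))^2 - d (k-1) - d k" using Ia(1) by (simp add: algebra_simps)
  have "d k * (ww (k-1) + ww k + vv (k-1) * vv k) = d k * (d k + f)"
    using Qa(3) unfolding Ua by (simp add: power2_eq_square algebra_simps)
  hence Q2a: "ww (k-1) + ww k + vv (k-1) * vv k = d k + f" using dk by simp
  have "d (k-1) + (ww k + (vv (k-1))^2 + vv (k-1) * vv k) = 0"
    using Q2a unfolding fa by (simp add: algebra_simps)
  hence Da: "d (k-1) = - (ww k + (vv (k-1))^2 + vv (k-1) * vv k)"
    by (simp only: eq_neg_iff_add_eq_0)
  have fb: "f = ww k - (vv k)^2 - d k - d (k+1)" using Ib(1) by (simp add: algebra_simps)
  have "d (k+1) * (ww k + ww (k+1) + vv k * vv (k+1)) = d (k+1) * (d (k+1) + f)"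
    using Qb(3) unfolding U by (simp add: power2_eq_square algebra_simps)
  hence Q2b: "ww k + ww (k+1) + vv k * vv (k+1) = d (k+1) + f" using dk1 by simp
  have "d k + (ww (k+1) + (vv k)^2 + vv k * vv (k+1)) = 0"
    using Q2b unfolding fb by (simp add: algebra_simps)
  hence Db: "d k = - (ww (k+1) + (vv k)^2 + vv k * vv (k+1))"
    by (simp only: eq_neg_iff_add_eq_0)
  have gb: "g = vv k * ww k - d k * e k - d (k+1) * e (k+1)" using Ib(2) by (simp add: algebra_simps)
  have K1': "v = - d (k+1) * (vv k * ww (k+1) + vv (k+1) * ww k) - 2 * (d (k+1))^2 * e (k+1) - d (k+1) * g - d (k+1) * e (k+1) * f"
    using Qb(4) unfolding U by (simp add: algebra_simps)
  have K1: "v = - d k * d (k+1) * (vv (k-1) + vv k + vv (k+1))"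
    unfolding K1' gb fb unfolding Ea Eb Db by (simp add: algebra_simps power2_eq_square)
  have K0': "v * w = (d (k+1))^2 * (e (k+1))^2 + d (k+1) * e (k+1) * g - d (k+1) * (ww k * ww (k+1))"
    using Qb(5) unfolding U by (simp add: algebra_simps)
  have K0: "v * w = d k * d (k+1) * (ww k - e k * e (k+1))"
    unfolding K0' gb unfolding Ea Eb Db by (simp add: algebra_simps power2_eq_square)
  have "v * (w + e k) = v * w + e k * v" by (simp add: algebra_simps)
  also have "\<dots> = d k * d (k+1) * (ww k - e k * e (k+1)) + e k * v" unfolding K0 ..
  also have "\<dots> = d k * d (k+1) * (ww k - e k * e (k+1)) + e k * (- d k * d (k+1) * (vv (k-1) + vv k + vv (k+1)))"
    by (subst K1) (rule refl)
  finally have vw: "v * (w + e k) = d k * d (k+1) * (ww k - e k * e (k+1) - e k * (vv (k-1) + vv k + vv (k+1)))"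
    by (simp add: algebra_simps)
  show "d (k - 1) * d k * d (k + 1) = - v * (w + e k)"
    unfolding minus_mult_left[symmetric] vw unfolding Da Ea Eb by (simp add: algebra_simps power2_eq_square)
  have "(w + e k) * (w + e (k+1)) = w\<^sup>2 + w * (e k + e (k+1)) + e k * e (k+1)"
    by (simp add: algebra_simps power2_eq_square)
  hence "d k * d (k + 1) * ((w + e k) * (w + e (k+1))) = d k * d (k + 1) * w\<^sup>2 + w * (d k * d (k + 1) *(e k + e (k+1))) + d k * d (k + 1) * (e k * e (k+1))"
    by (simp add: algebra_simps)
  also have "d k * d (k + 1) *(e k + e (k+1)) = v - d k * d (k + 1) * vv k"
    unfolding K1 Ea Eb by (simp add: algebra_simps)
  also have "d k * d (k + 1) * (e k * e (k+1)) = d k * d (k + 1) * ww k - v * w"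
    unfolding K0 by (simp add: algebra_simps)
  finally show "d k * d (k + 1) * (w\<^sup>2 - w * vv k + ww k) = d k * d (k + 1) * ((w + e k) * (w + e (k+1)))"
    by (simp add: algebra_simps)
  show "d k \<noteq> 0" by (rule dk)
qed
theorem mainTheorem8:
  fixes f g v w :: "'a::field"
    and u vv ww d e :: "int \<Rightarrow> 'a"
    and R :: "'a poly"
  assumes char2: "(2::'a) \<noteq> 0"
    and char3: "(3::'a) \<noteq> 0"
    and R_def: "R = - smult v ([:0, 1:] - [:w:])"
    and u_nz: "\<And>h. u h \<noteq> 0"
    and rel_i: "\<And>h. cubicA f g + smult (d h) [:e h, 1:] + smult (d (h + 1)) [:e (h + 1), 1:]
                  = [:vv h, 1:] * [:ww h, - vv h, 1:]"
    and rel_ii: "\<And>h. - smult (u h * u (h + 1)) ([:ww h, - vv h, 1:] * [:ww (h + 1), - vv (h + 1), 1:])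
                  = smult ((d (h + 1))\<^sup>2) ([:e (h + 1), 1:]\<^sup>2)
                    + smult (d (h + 1)) [:e (h + 1), 1:] * cubicA f g - R"
  shows "d (h - 1) * (d h)\<^sup>2 * (d (h + 1))\<^sup>2 * d (h + 2) = v\<^sup>2 * (ww h - w * vv h + w\<^sup>2)"
  proof -
  note Th = T[where R=R and v=v and w=w and u=u and f=f and g=g and d=d and e=e and vv=vv and ww=ww,
     OF R_def u_nz rel_i rel_ii]
  have a: "d (h - 1) * d h * d (h + 1) = - v * (w + e h)" by (rule Th(1))
  have b: "d h * d (h + 1) * d (h + 2) = - v * (w + e (h + 1))"
    using Th(1)[of "h+1"] by (simp add: add.assoc)
  have c: "d h * d (h + 1) * (w\<^sup>2 - w * vv h + ww h) = d h * d (h + 1) * ((w + e h) * (w + e (h+1)))"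
    by (rule Th(2))
  have nz: "d h * d (h + 1) \<noteq> 0" using Th(3)[of h] Th(3)[of "h+1"] by simp
  have c': "w\<^sup>2 - w * vv h + ww h = (w + e h) * (w + e (h+1))"
    using c nz by simp
  have "d (h - 1) * (d h)\<^sup>2 * (d (h + 1))\<^sup>2 * d (h + 2)
      = (d (h - 1) * d h * d (h + 1)) * (d h * d (h + 1) * d (h + 2))"
    by (simp add: power2_eq_square algebra_simps)
  also have "\<dots> = v\<^sup>2 * ((w + e h) * (w + e (h+1)))" unfolding a b
    by (simp add: power2_eq_square algebra_simps)
  also have "\<dots> = v\<^sup>2 * (ww h - w * vv h + w\<^sup>2)" unfolding c'[symmetric]
    by (simp add: algebra_simps)
  finally show ?thesis .
qed

end
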